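(* Let $K,H\le\mathbb{H}^\times$ be finite with $[K,K]\le H\trianglelefteq K$ and $H\ne\{1\}$, and let $n\ge3$. Then the poset $\mathcal{P}(G_n(K,H))$ of parabolic subgroups of $G_n(K,H)$ (ordered by inclusion), and hence the intersection lattice $L(\mathcal{A}(G_n(K,H)))$ (ordered by reverse inclusion), is isomorphic to the Dowling lattice $\mathcal{D}_n(K)$.
   Context: $\mathbb{H}$: quaternions. $A_n(K,H)$: diagonal matrices $\mathrm{diag}(k_1,\dots,k_n)$, $k_i\in K$, $k_1\cdots k_n\in H$; $G_n(K,H)$: group generated by $A_n(K,H)$ and permutation matrices, acting on $\mathbb{H}^n$ by left multiplication; it is a quaternionic reflection group (generated by finite-order $g$ with $\mathrm{rk}(1-g)=1$), $\mathcal{A}(G)$ is the set of fixed hyperplanes of its reflections, and $L(\mathcal{A})$ the set of intersections of subsets of $\mathcal{A}$. A parabolic subgroup is the pointwise stabilizer of a subset of $\mathbb{H}^n$. Dowling lattice $\mathcal{D}_n(K)$: its elements are partial $K$-partitions of $\{1,\dots,n\}$, i.e. sets $\{(B_1,[\xi_1]),\dots,(B_d,[\xi_d])\}$ where $B_1,\dots,B_d$ are pairwise disjoint nonempty subsets of $\{1,\dots,n\}$ (not necessarily covering it) and $[\xi_j]$ is the class of a function $\xi_j:B_j\to K$ modulo $\xi_j\sim g\xi_j$ ($g\in K$ constant, left multiplication). The order is: $\pi\le\pi'$ iff every block $(B',[\xi'])$ of $\pi'$ satisfies $B'=B_{i_1}\cup\dots\cup B_{i_p}$ for some blocks $(B_{i_r},[\xi_{i_r}])$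 of $\pi$ with $\xi'|_{B_{i_r}}\in K\cdot\xi_{i_r}$ for each $r$. *)

theory Defs
  imports Complex_Main "HOL-Combinatorics.Permutations"
begin

datatype quat = Quat (qre: real) (qi: real) (qj: real) (qk: real)

instantiation quat :: ring_1
begin
definition "0 = Quat 0 0 0 0"
definition "1 = Quat 1 0 0 0"
definition "x + y = Quat (qre x + qre y) (qi x + qi y) (qj x + qj y) (qk x + qk y)"
definition "x - y = Quat (qre x - qre y) (qi x - qi y) (qj x - qj y) (qk x - qk y)"
definition "- x = Quat (- qre x) (- qi x) (- qj x) (- qk x)"
definition "x * y = Quat
   (qre x * qre y - qi x * qi y - qj x * qj y - qk x * qk y)
   (qre x * qi y + qi x * qre y + qj x * qk y - qk x * qj y)
   (qre x * qj y - qi x * qk y + qj x * qre y + qk x * qi y)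
   (qre x * qk y + qi x * qj y - qj x * qi y + qk x * qre y)"
instance
  by standard (simp_all add: zero_quat_def one_quat_def plus_quat_def minus_quat_def
      uminus_quat_def times_quat_def quat.expand algebra_simps)
end

definition qconj :: "quat \<Rightarrow> quat" where
  "qconj x = Quat (qre x) (- qi x) (- qj x) (- qk x)"
definition qnsq :: "quat \<Rightarrow> real" where
  "qnsq x = (qre x)\<^sup>2 + (qi x)\<^sup>2 + (qj x)\<^sup>2 + (qk x)\<^sup>2"
definition qscale :: "real \<Rightarrow> quat \<Rightarrow> quat" where
  "qscale c x = Quat (c * qre x) (c * qi x) (c * qj x) (c * qk x)"

lemma qconj_mult: "qconj x * x = Quat (qnsq x) 0 0 0" "x * qconj x = Quat (qnsq x) 0 0 0"
  by (simp_all add: qconj_def qnsq_def times_quat_def power2_eq_square algebra_simps)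
lemma qscale_mult: "qscale c x * y = qscale c (x * y)" "x * qscale c y = qscale c (x * y)"
  by (simp_all add: qscale_def times_quat_def algebra_simps)
lemma qnsq_nz: "x \<noteq> 0 \<Longrightarrow> qnsq x \<noteq> 0"
  by (cases x) (simp add: qnsq_def zero_quat_def add_nonneg_eq_0_iff)

instantiation quat :: division_ring
begin
definition "inverse x = qscale (1 / qnsq x) (qconj x)"
definition "x div (y::quat) = x * inverse y"
instance
proof
  fix a :: quat
  assume "a \<noteq> 0"
  then have r: "qnsq a \<noteq> 0" by (rule qnsq_nz)
  show "inverse a * a = 1" "a * inverse a = 1"
    using r by (simp_all only: inverse_quat_def qscale_mult qconj_mult; simp add: qscale_def one_quat_def)+
next
  show "inverse (0::quat) = 0"
    by (simp add: inverse_quat_def zero_quat_def qscale_def qnsq_def)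
next
  fix a b :: quat show "a div b = a * inverse b" by (simp add: divide_quat_def)
qed
end

text \<open>Vectors in H^n are functions nat => quat vanishing outside {0..<n};
  matrices are functions nat => nat => quat vanishing outside {0..<n} x {0..<n}.\<close>

definition qvecs :: "nat \<Rightarrow> (nat \<Rightarrow> quat) set" where
  "qvecs n = {v. \<forall>i. n \<le> i \<longrightarrow> v i = 0}"

definition mmul :: "nat \<Rightarrow> (nat \<Rightarrow> nat \<Rightarrow> quat) \<Rightarrow> (nat \<Rightarrow> nat \<Rightarrow> quat) \<Rightarrow> (nat \<Rightarrow> nat \<Rightarrow> quat)" where
  "mmul n A B = (\<lambda>i j. if i < n \<and> j < n then (\<Sum>k<n. A i k * B k j) else 0)"

definition idm :: "nat \<Rightarrow> (nat \<Rightarrow> nat \<Rightarrow> quat)" where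
  "idm n = (\<lambda>i j. if i < n \<and> i = j then 1 else 0)"

definition minv :: "nat \<Rightarrow> (nat \<Rightarrow> nat \<Rightarrow> quat) \<Rightarrow> (nat \<Rightarrow> nat \<Rightarrow> quat)" where
  "minv n A = (SOME B. mmul n A B = idm n \<and> mmul n B A = idm n)"

definition mpow :: "nat \<Rightarrow> (nat \<Rightarrow> nat \<Rightarrow> quat) \<Rightarrow> nat \<Rightarrow> (nat \<Rightarrow> nat \<Rightarrow> quat)" where
  "mpow n A m = ((mmul n A) ^^ m) (idm n)"

definition mvec :: "nat \<Rightarrow> (nat \<Rightarrow> nat \<Rightarrow> quat) \<Rightarrow> (nat \<Rightarrow> quat) \<Rightarrow> (nat \<Rightarrow> quat)" where
  "mvec n A v = (\<lambda>i. if i < n then (\<Sum>j<n. A i j * v j) else 0)"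

definition diagm :: "nat \<Rightarrow> (nat \<Rightarrow> quat) \<Rightarrow> (nat \<Rightarrow> nat \<Rightarrow> quat)" where
  "diagm n d = (\<lambda>i j. if i < n \<and> i = j then d i else 0)"

definition permm :: "nat \<Rightarrow> (nat \<Rightarrow> nat) \<Rightarrow> (nat \<Rightarrow> nat \<Rightarrow> quat)" where
  "permm n p = (\<lambda>i j. if i < n \<and> j < n \<and> i = p j then 1 else 0)"

inductive_set gen_group :: "nat \<Rightarrow> (nat \<Rightarrow> nat \<Rightarrow> quat) set \<Rightarrow> (nat \<Rightarrow> nat \<Rightarrow> quat) set"
  for n S where
  gen_id: "idm n \<in> gen_group n S"
| gen_mul: "a \<in> S \<Longrightarrow> g \<in> gen_group n S \<Longrightarrow> mmul n a g \<in> gen_group n S"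
| gen_inv: "a \<in> S \<Longrightarrow> g \<in> gen_group n S \<Longrightarrow> mmul n (minv n a) g \<in> gen_group n S"

text \<open>Finite subgroup of the unit group of the quaternions (finiteness stated separately).\<close>
definition quat_subgroup :: "quat set \<Rightarrow> bool" where
  "quat_subgroup S \<longleftrightarrow> 0 \<notin> S \<and> 1 \<in> S \<and> (\<forall>a\<in>S. \<forall>b\<in>S. a * b \<in> S) \<and> (\<forall>a\<in>S. inverse a \<in> S)"

definition An :: "nat \<Rightarrow> quat set \<Rightarrow> quat set \<Rightarrow> (nat \<Rightarrow> nat \<Rightarrow> quat) set" where
  "An n K H = {diagm n d | d. (\<forall>i<n. d i \<in> K) \<and> prod_list (map d [0..<n]) \<in> H}"

definition Gn :: "nat \<Rightarrow> quat set \<Rightarrow> quat set \<Rightarrow> (nat \<Rightarrow> nat \<Rightarrow> quat) set" where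
  "Gn n K H = gen_group n (An n K H \<union> {permm n p | p. p permutes {..<n}})"

definition pointwise_stab :: "nat \<Rightarrow> (nat \<Rightarrow> nat \<Rightarrow> quat) set \<Rightarrow> (nat \<Rightarrow> quat) set \<Rightarrow> (nat \<Rightarrow> nat \<Rightarrow> quat) set" where
  "pointwise_stab n G X = {g \<in> G. \<forall>x\<in>X. mvec n g x = x}"

definition parabolics :: "nat \<Rightarrow> (nat \<Rightarrow> nat \<Rightarrow> quat) set \<Rightarrow> (nat \<Rightarrow> nat \<Rightarrow> quat) set set" where
  "parabolics n G = {pointwise_stab n G X | X. X \<subseteq> qvecs n}"

text \<open>rk(1-g) = 1: the image of v |-> v - g v on H^n is a one-dimensional
  (right) quaternionic subspace w H with w nonzero.\<close>
definition is_reflection :: "nat \<Rightarrow> (nat \<Rightarrow> nat \<Rightarrow> quat) set \<Rightarrow> (nat \<Rightarrow> nat \<Rightarrow> quat) \<Rightarrow> bool" where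
  "is_reflection n G g \<longleftrightarrow> g \<in> G \<and> (\<exists>m>0. mpow n g m = idm n) \<and>
     (\<exists>w\<in>qvecs n. w \<noteq> (\<lambda>_. 0) \<and>
        (\<lambda>v. (\<lambda>i. v i - mvec n g v i)) ` qvecs n = {(\<lambda>i. w i * q) | q. True})"

definition fixspace :: "nat \<Rightarrow> (nat \<Rightarrow> nat \<Rightarrow> quat) \<Rightarrow> (nat \<Rightarrow> quat) set" where
  "fixspace n g = {v \<in> qvecs n. mvec n g v = v}"

definition arrangement :: "nat \<Rightarrow> (nat \<Rightarrow> nat \<Rightarrow> quat) set \<Rightarrow> (nat \<Rightarrow> quat) set set" where
  "arrangement n G = {fixspace n g | g. is_reflection n G g}"

text \<open>Intersections of subsets of the arrangement (the empty intersection is H^n).\<close>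
definition intersection_lattice :: "nat \<Rightarrow> (nat \<Rightarrow> nat \<Rightarrow> quat) set \<Rightarrow> (nat \<Rightarrow> quat) set set" where
  "intersection_lattice n G = {qvecs n \<inter> \<Inter>S | S. S \<subseteq> arrangement n G}"

text \<open>A function xi : B -> K is represented as nat => quat with values in K on B, 0 off B.\<close>
definition kfuns :: "quat set \<Rightarrow> nat set \<Rightarrow> (nat \<Rightarrow> quat) set" where
  "kfuns K B = {\<xi>. (\<forall>i\<in>B. \<xi> i \<in> K) \<and> (\<forall>i. i \<notin> B \<longrightarrow> \<xi> i = 0)}"

definition kclass :: "quat set \<Rightarrow> (nat \<Rightarrow> quat) \<Rightarrow> (nat \<Rightarrow> quat) set" where
  "kclass K \<xi> = {(\<lambda>i. g * \<xi> i) | g. g \<in> K}"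

definition restr :: "nat set \<Rightarrow> (nat \<Rightarrow> quat) \<Rightarrow> (nat \<Rightarrow> quat)" where
  "restr B \<xi> = (\<lambda>i. if i \<in> B then \<xi> i else 0)"

definition dowling :: "nat \<Rightarrow> quat set \<Rightarrow> (nat set \<times> (nat \<Rightarrow> quat) set) set set" where
  "dowling n K = {\<pi>. (\<forall>(B, C)\<in>\<pi>. B \<noteq> {} \<and> B \<subseteq> {..<n} \<and> (\<exists>\<xi>\<in>kfuns K B. C = kclass K \<xi>)) \<and>
      (\<forall>b1\<in>\<pi>. \<forall>b2\<in>\<pi>. b1 \<noteq> b2 \<longrightarrow> fst b1 \<inter> fst b2 = {})}"

definition dowling_le :: "(nat set \<times> (nat \<Rightarrow> quat) set) set \<Rightarrow> (nat set \<times> (nat \<Rightarrow> quat) set) set \<Rightarrow> bool" where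
  "dowling_le \<pi> \<pi>' \<longleftrightarrow> (\<forall>(B', C')\<in>\<pi>'. \<exists>S\<subseteq>\<pi>. B' = \<Union>(fst ` S) \<and>
      (\<forall>(B, C)\<in>S. \<forall>\<xi>'\<in>C'. restr B \<xi>' \<in> C))"

definition poset_iso :: "'a set \<Rightarrow> ('a \<Rightarrow> 'a \<Rightarrow> bool) \<Rightarrow> 'b set \<Rightarrow> ('b \<Rightarrow> 'b \<Rightarrow> bool) \<Rightarrow> bool" where
  "poset_iso X le Y le' \<longleftrightarrow> (\<exists>f. bij_betw f X Y \<and> (\<forall>x\<in>X. \<forall>y\<in>X. le x y \<longleftrightarrow> le' (f x) (f y)))"

end

theory Submission
  imports Defs "HOL-Combinatorics.Permutations"
begin


definition Mm :: "nat \<Rightarrow> (nat \<Rightarrow> nat) \<Rightarrow> (nat \<Rightarrow> quat) \<Rightarrow> nat \<Rightarrow> nat \<Rightarrow> quat" where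
  "Mm n p c = (\<lambda>k l. if k < n \<and> l < n \<and> k = p l then c l else 0)"

lemma perm_lt: "p permutes {..<n} \<Longrightarrow> (p l < n) = (l < n)"
  using permutes_in_image[of p "{..<n}" l] by simp

lemma perm_inv_lt: "p permutes {..<n} \<Longrightarrow> (inv p l < n) = (l < n)"
  using permutes_in_image[of "inv p" "{..<n}" l] permutes_inv[of p "{..<n}"] by simp

lemma mmul_Mm:
  assumes p: "p permutes {..<n}" and q: "q permutes {..<n}"
  shows "mmul n (Mm n p c) (Mm n q d) = Mm n (p \<circ> q) (\<lambda>l. c (q l) * d l)"
proof (intro ext)
  fix i j
  show "mmul n (Mm n p c) (Mm n q d) i j = Mm n (p \<circ> q) (\<lambda>l. c (q l) * d l) i j"
  proof (cases "i < n \<and> j < n")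
    case True
    have "(\<Sum>k<n. Mm n p c i k * Mm n q d k j) =
        (\<Sum>k<n. if k = q j then (if i = p (q j) then c (q j) * d j else 0) else 0)"
      using True perm_lt[OF q, of j] perm_lt[OF p, of "q j"] by (intro sum.cong) (auto simp: Mm_def)
    also have "\<dots> = (if i = p (q j) then c (q j) * d j else 0)"
      using True perm_lt[OF q, of j] by simp
    finally show ?thesis using True by (simp add: mmul_def Mm_def)
  qed (auto simp: mmul_def Mm_def)
qed

lemma mvec_Mm:
  assumes p: "p permutes {..<n}"
  shows "mvec n (Mm n p c) v = (\<lambda>k. if k < n then c (inv p k) * v (inv p k) else 0)"
proof (intro ext)
  fix k
  show "mvec n (Mm n p c) v k = (if k < n then c (inv p k) * v (inv p k) else 0)"
  proof (cases "k < n")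
    case True
    have "(\<Sum>l<n. Mm n p c k l * v l) = (\<Sum>l<n. if l = inv p k then c (inv p k) * v (inv p k) else 0)"
      by (rule sum.cong) (auto simp: Mm_def True permutes_inv_eq[OF p] permutes_inverses[OF p])
    also have "\<dots> = c (inv p k) * v (inv p k)"
      using True perm_inv_lt[OF p, of k] by simp
    finally show ?thesis using True by (simp add: mvec_def)
  qed (simp add: mvec_def)
qed

lemma idm_Mm: "idm n = Mm n id (\<lambda>_. 1)"
  by (auto simp: idm_def Mm_def fun_eq_iff)

lemma diagm_Mm: "diagm n d = Mm n id d"
  by (auto simp: diagm_def Mm_def fun_eq_iff)

lemma permm_Mm: "permm n p = Mm n p (\<lambda>_. 1)"
  by (auto simp: permm_def Mm_def fun_eq_iff)

lemma Mm_cong: "(\<And>l. l < n \<Longrightarrow> p l = q l) \<Longrightarrow> (\<And>l. l < n \<Longrightarrow> c l = d l) \<Longrightarrow> Mm n p c = Mm n q d"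
  by (auto simp: Mm_def fun_eq_iff)

lemma qsK:
  assumes "quat_subgroup K"
  shows "k \<in> K \<Longrightarrow> k \<noteq> 0" "k \<in> K \<Longrightarrow> inverse k \<in> K" "1 \<in> K"
    "a \<in> K \<Longrightarrow> b \<in> K \<Longrightarrow> a * b \<in> K"
  using assms unfolding quat_subgroup_def by auto

lemma Mm_inv:
  assumes p: "p permutes {..<n}" and c: "\<forall>l<n. c l \<noteq> 0"
  shows "mmul n (Mm n (inv p) (\<lambda>m. inverse (c (inv p m)))) (Mm n p c) = idm n"
    "mmul n (Mm n p c) (Mm n (inv p) (\<lambda>m. inverse (c (inv p m)))) = idm n"
proof -
  have ip: "inv p permutes {..<n}" using p by (rule permutes_inv)
  show "mmul n (Mm n (inv p) (\<lambda>m. inverse (c (inv p m)))) (Mm n p c) = idm n"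
    unfolding mmul_Mm[OF ip p] idm_Mm
    by (rule Mm_cong) (simp_all add: permutes_inverses[OF p] c)
  show "mmul n (Mm n p c) (Mm n (inv p) (\<lambda>m. inverse (c (inv p m)))) = idm n"
    unfolding mmul_Mm[OF p ip] idm_Mm
    by (rule Mm_cong) (simp_all add: permutes_inverses[OF p] c perm_inv_lt[OF p])
qed

lemma mmul_col:
  assumes p: "p permutes {..<n}" and "i < n" "j < n"
  shows "mmul n B (Mm n p c) i j = B i (p j) * c j"
proof -
  have "(\<Sum>k<n. B i k * Mm n p c k j) = (\<Sum>k<n. if k = p j then B i (p j) * c j else 0)"
    by (rule sum.cong) (auto simp: Mm_def assms)
  also have "\<dots> = B i (p j) * c j" using perm_lt[OF p, of j] assms by simp
  finally show ?thesis using assms by (simp add: mmul_def)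
qed

lemma minv_Mm:
  assumes p: "p permutes {..<n}" and c: "\<forall>l<n. c l \<noteq> 0"
  shows "mmul n (minv n (Mm n p c)) g = mmul n (Mm n (inv p) (\<lambda>m. inverse (c (inv p m)))) g"
proof -
  define Bi where "Bi = Mm n (inv p) (\<lambda>m. inverse (c (inv p m)))"
  define B where "B = minv n (Mm n p c)"
  have "\<exists>B. mmul n (Mm n p c) B = idm n \<and> mmul n B (Mm n p c) = idm n"
    using Mm_inv[OF p c] by blast
  then have "mmul n (Mm n p c) B = idm n \<and> mmul n B (Mm n p c) = idm n"
    unfolding B_def minv_def by (rule someI_ex)
  then have hB: "mmul n B (Mm n p c) = idm n" by simp
  have eq: "B i m = Bi i m" if "i < n" "m < n" for i m
  proof -
    define j where "j = inv p m"
    have j: "j < n" "p j = m" using that perm_inv_lt[OF p] permutes_inverses[OF p] by (auto simp: j_def)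
    have "B i m * c j = (if i = j then 1 else 0)"
      using mmul_col[OF p that(1) j(1), of B c] hB j that by (simp add: idm_def)
    then have "B i m * c j * inverse (c j) = (if i = j then 1 else 0) * inverse (c j)" by simp
    moreover have "c j \<noteq> 0" using c j(1) by simp
    ultimately have "B i m = (if i = j then 1 else 0) * inverse (c j)"
      by (simp add: mult.assoc)
    then show ?thesis using that j unfolding Bi_def Mm_def j_def by auto
  qed
  show ?thesis unfolding B_def[symmetric] Bi_def[symmetric] mmul_def
    by (intro ext) (auto intro!: sum.cong simp: eq)
qed

definition monoK :: "nat \<Rightarrow> quat set \<Rightarrow> (nat \<Rightarrow> nat \<Rightarrow> quat) \<Rightarrow> bool" where
  "monoK n K g \<longleftrightarrow> (\<exists>p c. p permutes {..<n} \<and> (\<forall>l<n. c l \<in> K) \<and> g = Mm n p c)"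

lemma gens_mono:
  assumes K: "quat_subgroup K" and a: "a \<in> An n K H \<union> {permm n p | p. p permutes {..<n}}"
  shows "monoK n K a"
proof -
  { assume "a \<in> An n K H"
    then obtain d where "a = Mm n id d" "\<forall>i<n. d i \<in> K" unfolding An_def diagm_Mm by blast
    then have ?thesis unfolding monoK_def by (intro exI[of _ id] exI[of _ d]) simp }
  moreover
  { assume "a \<in> {permm n p | p. p permutes {..<n}}"
    then obtain p where "a = Mm n p (\<lambda>_. 1)" "p permutes {..<n}" unfolding permm_Mm by blast
    then have ?thesis unfolding monoK_def using qsK(3)[OF K] by (intro exI[of _ p] exI[of _ "\<lambda>_. 1"]) simp }
  ultimately show ?thesis using a by blast
qed

lemma mono_mul:
  assumes K: "quat_subgroup K" and "monoK n K a" "monoK n K g"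
  shows "monoK n K (mmul n a g)"
proof -
  obtain p c q d where pq: "p permutes {..<n}" "\<forall>l<n. c l \<in> K" "a = Mm n p c"
    "q permutes {..<n}" "\<forall>l<n. d l \<in> K" "g = Mm n q d"
    using assms unfolding monoK_def by metis
  show ?thesis unfolding monoK_def pq(3,6) mmul_Mm[OF pq(1,4)]
    apply (intro exI[of _ "p \<circ> q"] exI[of _ "\<lambda>l. c (q l) * d l"] conjI refl)
    using pq permutes_compose[OF pq(4,1)] qsK(4)[OF K] perm_lt[OF pq(4)] by auto
qed

lemma mono_inv:
  assumes K: "quat_subgroup K" and "monoK n K a" "monoK n K g"
  shows "monoK n K (mmul n (minv n a) g)"
proof -
  obtain p c where pc: "p permutes {..<n}" "\<forall>l<n. c l \<in> K" "a = Mm n p c"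
    using assms unfolding monoK_def by metis
  have c0: "\<forall>l<n. c l \<noteq> 0" using pc(2) qsK(1)[OF K] by blast
  have "monoK n K (Mm n (inv p) (\<lambda>m. inverse (c (inv p m))))"
    unfolding monoK_def
    apply (intro exI[of _ "inv p"] exI[of _ "\<lambda>m. inverse (c (inv p m))"] conjI refl)
    using permutes_inv[OF pc(1)] pc(2) qsK(2)[OF K] perm_inv_lt[OF pc(1)] by auto
  then show ?thesis unfolding pc(3) minv_Mm[OF pc(1) c0] using mono_mul[OF K _ assms(3)] by blast
qed

lemma G_mono:
  assumes K: "quat_subgroup K" and g: "g \<in> Gn n K H"
  shows "monoK n K g"
  using g unfolding Gn_def
proof (induction rule: gen_group.induct)
  case gen_id
  then show ?case unfolding monoK_def idm_Mm using qsK(3)[OF K]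
    by (intro exI[of _ id] exI[of _ "\<lambda>_. 1"]) simp
next
  case (gen_mul a g)
  then show ?case using mono_mul[OF K gens_mono[OF K]] by blast
next
  case (gen_inv a g)
  then show ?case using mono_inv[OF K gens_mono[OF K]] by blast
qed



definition Phi :: "nat \<Rightarrow> (nat set \<times> (nat \<Rightarrow> quat) set) set \<Rightarrow> (nat \<Rightarrow> quat) set" where
  "Phi n \<pi> = {x \<in> qvecs n. (\<forall>i<n. i \<notin> \<Union>(fst ` \<pi>) \<longrightarrow> x i = 0) \<and>
      (\<forall>(B, C)\<in>\<pi>. \<forall>\<xi>\<in>C. \<forall>i\<in>B. \<forall>j\<in>B. \<xi> i * x i = \<xi> j * x j)}"

lemma PhiD:
  assumes "x \<in> Phi n \<pi>"
  shows "x \<in> qvecs n" "\<And>i. i < n \<Longrightarrow> i \<notin> \<Union>(fst ` \<pi>) \<Longrightarrow> x i = 0"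
    "\<And>B C \<xi> i j. (B, C) \<in> \<pi> \<Longrightarrow> \<xi> \<in> C \<Longrightarrow> i \<in> B \<Longrightarrow> j \<in> B \<Longrightarrow> \<xi> i * x i = \<xi> j * x j"
  using assms unfolding Phi_def by fastforce+

lemma PhiI:
  assumes "x \<in> qvecs n" "\<And>i. i < n \<Longrightarrow> i \<notin> \<Union>(fst ` \<pi>) \<Longrightarrow> x i = 0"
    "\<And>B C \<xi> i j. (B, C) \<in> \<pi> \<Longrightarrow> \<xi> \<in> C \<Longrightarrow> i \<in> B \<Longrightarrow> j \<in> B \<Longrightarrow> \<xi> i * x i = \<xi> j * x j"
  shows "x \<in> Phi n \<pi>"
  using assms unfolding Phi_def by blast

lemma dowD:
  assumes "\<pi> \<in> dowling n K" "(B, C) \<in> \<pi>"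
  shows "B \<noteq> {}" "B \<subseteq> {..<n}" "\<exists>\<xi>\<in>kfuns K B. C = kclass K \<xi>"
  using assms unfolding dowling_def by fastforce+

lemma dowD2:
  assumes "\<pi> \<in> dowling n K" "(B, C) \<in> \<pi>" "(B', C') \<in> \<pi>" "i \<in> B" "i \<in> B'"
  shows "B = B' \<and> C = C'"
proof (rule ccontr)
  assume "\<not> (B = B' \<and> C = C')"
  then have ne: "(B, C) \<noteq> (B', C')" by simp
  have "\<forall>b1\<in>\<pi>. \<forall>b2\<in>\<pi>. b1 \<noteq> b2 \<longrightarrow> fst b1 \<inter> fst b2 = {}"
    using assms(1) unfolding dowling_def by blast
  then have "fst (B, C) \<inter> fst (B', C') = {}" using assms(2,3) ne by blast
  then show False using assms(4,5) by auto
qed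

lemma kfunsD: "\<xi> \<in> kfuns K B \<Longrightarrow> i \<in> B \<Longrightarrow> \<xi> i \<in> K"
  "\<xi> \<in> kfuns K B \<Longrightarrow> i \<notin> B \<Longrightarrow> \<xi> i = 0"
  unfolding kfuns_def by auto

lemma kclass_self: "quat_subgroup K \<Longrightarrow> \<xi> \<in> kclass K \<xi>"
  unfolding kclass_def using qsK(3) by fastforce

lemma kclassD: "\<eta> \<in> kclass K \<xi> \<Longrightarrow> \<exists>g\<in>K. \<eta> = (\<lambda>i. g * \<xi> i)"
  unfolding kclass_def by blast

lemma kclassI: "g \<in> K \<Longrightarrow> \<eta> = (\<lambda>i. g * \<xi> i) \<Longrightarrow> \<eta> \<in> kclass K \<xi>"
  unfolding kclass_def by blast

lemma kclass_eq:
  assumes K: "quat_subgroup K" and "\<eta> \<in> kclass K \<xi>"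
  shows "kclass K \<eta> = kclass K \<xi>"
proof -
  obtain g where g: "g \<in> K" "\<eta> = (\<lambda>i. g * \<xi> i)" using kclassD[OF assms(2)] by blast
  have g0: "g \<noteq> 0" using qsK(1)[OF K g(1)] .
  show ?thesis
  proof
    show "kclass K \<eta> \<subseteq> kclass K \<xi>"
    proof
      fix \<zeta> assume "\<zeta> \<in> kclass K \<eta>"
      then obtain h where "h \<in> K" "\<zeta> = (\<lambda>i. h * \<eta> i)" using kclassD by blast
      then show "\<zeta> \<in> kclass K \<xi>" using g qsK(4)[OF K]
        by (intro kclassI[of "h * g"]) (auto simp: mult.assoc)
    qed
    show "kclass K \<xi> \<subseteq> kclass K \<eta>"
    proof
      fix \<zeta> assume "\<zeta> \<in> kclass K \<xi>"
      then obtain h where h: "h \<in> K" "\<zeta> = (\<lambda>i. h * \<xi> i)" using kclassD by blast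
      have ig: "inverse g * (g * x) = x" for x using g0 by (simp add: mult.assoc[symmetric])
      have "\<zeta> = (\<lambda>i. (h * inverse g) * \<eta> i)" using h g g0 by (auto simp: mult.assoc ig)
      then show "\<zeta> \<in> kclass K \<eta>" using g h qsK(4,2)[OF K]
        by (intro kclassI[of "h * inverse g"]) auto
    qed
  qed
qed

definition tv :: "(nat \<Rightarrow> quat) \<Rightarrow> nat set \<Rightarrow> nat \<Rightarrow> quat" where
  "tv \<xi> B = (\<lambda>i. if i \<in> B then inverse (\<xi> i) else 0)"

lemma tv_in:
  assumes K: "quat_subgroup K" and \<pi>: "\<pi> \<in> dowling n K" and b: "(B', C') \<in> \<pi>"
    and xi: "\<xi>' \<in> kfuns K B'" "C' = kclass K \<xi>'"
  shows "tv \<xi>' B' \<in> Phi n \<pi>"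
proof (rule PhiI)
  show "tv \<xi>' B' \<in> qvecs n" using dowD(2)[OF \<pi> b] unfolding qvecs_def tv_def by auto
  show "tv \<xi>' B' i = 0" if "i < n" "i \<notin> \<Union>(fst ` \<pi>)" for i
    using that b unfolding tv_def by force
  show "\<xi> i * tv \<xi>' B' i = \<xi> j * tv \<xi>' B' j" if h: "(B, C) \<in> \<pi>" "\<xi> \<in> C" "i \<in> B" "j \<in> B" for B C \<xi> i j
  proof (cases "B \<inter> B' = {}")
    case True
    then show ?thesis using h unfolding tv_def by auto
  next
    case False
    then obtain k where "k \<in> B" "k \<in> B'" by blast
    then have e: "B = B'" "C = C'" using dowD2[OF \<pi> h(1) b] by auto
    obtain g where g: "g \<in> K" "\<xi> = (\<lambda>i. g * \<xi>' i)" using kclassD h(2) e xi by blast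
    have "\<xi>' i \<noteq> 0" "\<xi>' j \<noteq> 0" using kfunsD(1)[OF xi(1)] h e qsK(1)[OF K] by auto
    then show ?thesis using h e g unfolding tv_def by (simp add: mult.assoc)
  qed
qed

lemma Phi_support:
  assumes K: "quat_subgroup K" and \<pi>': "\<pi>' \<in> dowling n K"
    and sub: "Phi n \<pi>' \<subseteq> Phi n \<pi>" and b: "(B', C') \<in> \<pi>'"
  shows "B' \<subseteq> \<Union>(fst ` \<pi>)"
proof
  fix i assume i: "i \<in> B'"
  obtain \<xi>' where xi: "\<xi>' \<in> kfuns K B'" "C' = kclass K \<xi>'" using dowD(3)[OF \<pi>' b] by blast
  have v: "tv \<xi>' B' \<in> Phi n \<pi>" using tv_in[OF K \<pi>' b xi] sub by blast
  have "tv \<xi>' B' i \<noteq> 0" using i kfunsD(1)[OF xi(1) i] qsK(1)[OF K] unfolding tv_def by simp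
  moreover have "i < n" using dowD(2)[OF \<pi>' b] i by auto
  ultimately show "i \<in> \<Union>(fst ` \<pi>)" using PhiD(2)[OF v] by blast
qed

lemma Phi_core:
  assumes K: "quat_subgroup K" and \<pi>: "\<pi> \<in> dowling n K" and \<pi>': "\<pi>' \<in> dowling n K"
    and sub: "Phi n \<pi>' \<subseteq> Phi n \<pi>" and b': "(B', C') \<in> \<pi>'" and b: "(B, C) \<in> \<pi>"
    and i: "i \<in> B" "i \<in> B'"
  shows "B \<subseteq> B' \<and> (\<forall>\<xi>'\<in>C'. restr B \<xi>' \<in> C)"
proof -
  obtain \<xi>' where xi': "\<xi>' \<in> kfuns K B'" "C' = kclass K \<xi>'" using dowD(3)[OF \<pi>' b'] by blast
  obtain \<xi> where xi: "\<xi> \<in> kfuns K B" "C = kclass K \<xi>" using dowD(3)[OF \<pi> b] by blast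
  define v where "v = tv \<xi>' B'"
  have v: "v \<in> Phi n \<pi>" using tv_in[OF K \<pi>' b' xi'] sub unfolding v_def by blast
  define s where "s = \<xi> i * inverse (\<xi>' i)"
  have sK: "s \<in> K" unfolding s_def using qsK[OF K] kfunsD(1)[OF xi(1) i(1)] kfunsD(1)[OF xi'(1) i(2)] by blast
  then have s0: "s \<noteq> 0" using qsK(1)[OF K] by blast
  have eqs: "\<xi> j * v j = s" if "j \<in> B" for j
    using PhiD(3)[OF v b kclass_self[OF K, of \<xi>, folded xi(2)] that i(1)] i(2)
    unfolding v_def tv_def s_def by simp
  have BB: "B \<subseteq> B'"
  proof
    fix j assume j: "j \<in> B"
    show "j \<in> B'"
    proof (rule ccontr)
      assume "j \<notin> B'" then have "v j = 0" unfolding v_def tv_def by simp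
      then show False using eqs[OF j] s0 by simp
    qed
  qed
  have rel: "\<xi>' j = inverse s * \<xi> j" if j: "j \<in> B" for j
  proof -
    have j': "j \<in> B'" using BB j by blast
    have nz: "\<xi>' j \<noteq> 0" using kfunsD(1)[OF xi'(1) j'] qsK(1)[OF K] by blast
    have "\<xi> j * inverse (\<xi>' j) = s" using eqs[OF j] j' unfolding v_def tv_def by simp
    then have "\<xi> j * inverse (\<xi>' j) * \<xi>' j = s * \<xi>' j" by simp
    then have "\<xi> j = s * \<xi>' j" using nz by (simp add: mult.assoc)
    then show ?thesis using s0 by (simp add: mult.assoc[symmetric])
  qed
  have "restr B \<eta> \<in> C" if eta: "\<eta> \<in> C'" for \<eta>
  proof -
    obtain g where g: "g \<in> K" "\<eta> = (\<lambda>i. g * \<xi>' i)" using kclassD eta xi'(2) by blast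
    have "restr B \<eta> = (\<lambda>j. (g * inverse s) * \<xi> j)"
      using rel g kfunsD(2)[OF xi(1)] unfolding restr_def by (auto simp: mult.assoc)
    then show ?thesis unfolding xi(2) using g sK qsK(2,4)[OF K] by (intro kclassI) auto
  qed
  then show ?thesis using BB by blast
qed

lemma Phi_le:
  assumes K: "quat_subgroup K" and \<pi>: "\<pi> \<in> dowling n K" and \<pi>': "\<pi>' \<in> dowling n K"
  shows "Phi n \<pi>' \<subseteq> Phi n \<pi> \<longleftrightarrow> dowling_le \<pi> \<pi>'"
proof
  assume sub: "Phi n \<pi>' \<subseteq> Phi n \<pi>"
  show "dowling_le \<pi> \<pi>'"
    unfolding dowling_le_def
  proof (intro ballI, clarify)
    fix B' C' assume b': "(B', C') \<in> \<pi>'"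
    define S where "S = {b \<in> \<pi>. fst b \<inter> B' \<noteq> {}}"
    have core: "B \<subseteq> B' \<and> (\<forall>\<xi>'\<in>C'. restr B \<xi>' \<in> C)" if "(B, C) \<in> S" for B C
    proof -
      from that have b: "(B, C) \<in> \<pi>" "B \<inter> B' \<noteq> {}" unfolding S_def by auto
      then obtain j where "j \<in> B" "j \<in> B'" by blast
      then show ?thesis using Phi_core[OF K \<pi> \<pi>' sub b' b(1)] by blast
    qed
    have "B' = \<Union>(fst ` S)"
    proof
      show "B' \<subseteq> \<Union>(fst ` S)"
      proof
        fix i assume i: "i \<in> B'"
        then have "i \<in> \<Union>(fst ` \<pi>)" using Phi_support[OF K \<pi>' sub b'] by blast
        then obtain b where b: "b \<in> \<pi>" "i \<in> fst b" by blast
        then have "b \<in> S" using i unfolding S_def by blast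
        then show "i \<in> \<Union>(fst ` S)" using b by blast
      qed
      show "\<Union>(fst ` S) \<subseteq> B'"
      proof
        fix i assume "i \<in> \<Union>(fst ` S)"
        then obtain B C where "(B, C) \<in> S" "i \<in> B" by force
        then show "i \<in> B'" using core by blast
      qed
    qed
    moreover have "\<forall>(B, C)\<in>S. \<forall>\<xi>'\<in>C'. restr B \<xi>' \<in> C"
      using core by blast
    moreover have "S \<subseteq> \<pi>" unfolding S_def by blast
    ultimately show "\<exists>S\<subseteq>\<pi>. B' = \<Union>(fst ` S) \<and> (\<forall>(B, C)\<in>S. \<forall>\<xi>'\<in>C'. restr B \<xi>' \<in> C)"
      by (intro exI[of _ S]) simp
  qed
next
  assume le: "dowling_le \<pi> \<pi>'"
  have leD: "\<exists>S\<subseteq>\<pi>. B' = \<Union>(fst ` S) \<and> (\<forall>(B, C)\<in>S. \<forall>\<xi>'\<in>C'. restr B \<xi>' \<in> C)"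
    if "(B', C') \<in> \<pi>'" for B' C' using bspec[OF le[unfolded dowling_le_def] that] by simp
  have key: "B \<subseteq> B' \<and> (\<forall>\<xi>'\<in>C'. restr B \<xi>' \<in> C)"
    if b: "(B, C) \<in> \<pi>" and b': "(B', C') \<in> \<pi>'" and j: "j \<in> B" "j \<in> B'" for B C B' C' j
  proof -
    obtain S where S: "S \<subseteq> \<pi>" "B' = \<Union>(fst ` S)" "\<forall>(B, C)\<in>S. \<forall>\<xi>'\<in>C'. restr B \<xi>' \<in> C"
      using leD[OF b'] by blast
    obtain B0 C0 where b0: "(B0, C0) \<in> S" "j \<in> B0" using S(2) j(2) by auto
    have "B0 = B \<and> C0 = C" using dowD2[OF \<pi> _ b] b0 S(1) j(1) by blast
    then show ?thesis using b0 S by force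
  qed
  show "Phi n \<pi>' \<subseteq> Phi n \<pi>"
  proof
    fix y assume y: "y \<in> Phi n \<pi>'"
    show "y \<in> Phi n \<pi>"
    proof (rule PhiI)
      show "y \<in> qvecs n" using PhiD(1)[OF y] .
      show "y i = 0" if "i < n" "i \<notin> \<Union>(fst ` \<pi>)" for i
      proof -
        have "i \<notin> \<Union>(fst ` \<pi>')"
        proof
          assume "i \<in> \<Union>(fst ` \<pi>')"
          then obtain B' C' where "(B', C') \<in> \<pi>'" "i \<in> B'" by auto
          then show False using leD that(2) by fastforce
        qed
        then show ?thesis using PhiD(2)[OF y] that by blast
      qed
      show "\<xi> i * y i = \<xi> j * y j" if b: "(B, C) \<in> \<pi>" "\<xi> \<in> C" "i \<in> B" "j \<in> B" for B C \<xi> i j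
      proof (cases "\<exists>B' C'. (B', C') \<in> \<pi>' \<and> (i \<in> B' \<or> j \<in> B')")
        case True
        then obtain B' C' k where b': "(B', C') \<in> \<pi>'" "k \<in> B'" "k \<in> B" using b by blast
        have kk: "B \<subseteq> B'" "\<forall>\<xi>'\<in>C'. restr B \<xi>' \<in> C" using key[OF b(1) b' (1) b'(3) b'(2)] by auto
        obtain \<xi>' where xi': "\<xi>' \<in> kfuns K B'" "C' = kclass K \<xi>'" using dowD(3)[OF \<pi>' b'(1)] by blast
        have r: "restr B \<xi>' \<in> C" using kk(2) kclass_self[OF K] xi'(2) by blast
        obtain \<xi>0 where xi0: "\<xi>0 \<in> kfuns K B" "C = kclass K \<xi>0" using dowD(3)[OF \<pi> b(1)] by blast
        obtain g where g: "g \<in> K" "restr B \<xi>' = (\<lambda>i. g * \<xi>0 i)" using kclassD r xi0 by blast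
        obtain h where h: "h \<in> K" "\<xi> = (\<lambda>i. h * \<xi>0 i)" using kclassD b(2) xi0 by blast
        have g0: "g \<noteq> 0" using qsK(1)[OF K g(1)] .
        have xe: "\<xi> l = (h * inverse g) * \<xi>' l" if "l \<in> B" for l
        proof -
          have "\<xi>' l = g * \<xi>0 l" using fun_cong[OF g(2), of l] that unfolding restr_def by simp
          then have "inverse g * \<xi>' l = \<xi>0 l" using g0 by (simp add: mult.assoc[symmetric])
          then show ?thesis using h by (simp add: mult.assoc)
        qed
        have "\<xi>' i * y i = \<xi>' j * y j"
          using PhiD(3)[OF y b'(1) kclass_self[OF K, of \<xi>', folded xi'(2)]] b kk(1) by blast
        then show ?thesis using xe[OF b(3)] xe[OF b(4)] by (simp add: mult.assoc)
      next
        case False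
        have "i < n" "j < n" using dowD(2)[OF \<pi> b(1)] b by auto
        then have "y i = 0" "y j = 0" using PhiD(2)[OF y] False by fastforce+
        then show ?thesis by simp
      qed
    qed
  qed
qed

lemma Phi_inj:
  assumes K: "quat_subgroup K" and \<pi>: "\<pi> \<in> dowling n K" and \<pi>': "\<pi>' \<in> dowling n K"
    and eq: "Phi n \<pi> = Phi n \<pi>'"
  shows "\<pi> = \<pi>'"
proof -
  have one: "\<pi>1 \<subseteq> \<pi>2" if p1: "\<pi>1 \<in> dowling n K" and p2: "\<pi>2 \<in> dowling n K"
    and e: "Phi n \<pi>1 = Phi n \<pi>2" for \<pi>1 \<pi>2
  proof
    fix b assume b: "b \<in> \<pi>1"
    obtain B C where bc: "b = (B, C)" by (cases b)
    then have b1: "(B, C) \<in> \<pi>1" using b by simp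
    obtain i where i: "i \<in> B" using dowD(1)[OF p1 b1] by blast
    have "B \<subseteq> \<Union>(fst ` \<pi>2)" using Phi_support[OF K p1 _ b1, of \<pi>2] e by simp
    then obtain B' C' where b2: "(B', C') \<in> \<pi>2" "i \<in> B'" using i by auto
    have c1: "B' \<subseteq> B \<and> (\<forall>\<xi>\<in>C. restr B' \<xi> \<in> C')"
      using Phi_core[OF K p2 p1 _ b1 b2(1) b2(2) i] e by simp
    have c2: "B \<subseteq> B' \<and> (\<forall>\<xi>\<in>C'. restr B \<xi> \<in> C)"
      using Phi_core[OF K p1 p2 _ b2(1) b1 i b2(2)] e by simp
    have BB: "B = B'" using c1 c2 by blast
    obtain \<xi> where xi: "\<xi> \<in> kfuns K B" "C = kclass K \<xi>" using dowD(3)[OF p1 b1] by blast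
    have "restr B \<xi> = \<xi>" using kfunsD(2)[OF xi(1)] unfolding restr_def by auto
    then have "\<xi> \<in> C'" using c1 BB xi kclass_self[OF K] by metis
    then obtain \<xi>' where xi': "\<xi>' \<in> kfuns K B'" "C' = kclass K \<xi>'" "\<xi> \<in> kclass K \<xi>'"
      using dowD(3)[OF p2 b2(1)] by blast
    have "C = C'" using kclass_eq[OF K xi'(3)] xi xi' by simp
    then show "b \<in> \<pi>2" using bc BB b2 by simp
  qed
  show ?thesis using one[OF \<pi> \<pi>' eq] one[OF \<pi>' \<pi> eq[symmetric]] by blast
qed



definition rel :: "quat set \<Rightarrow> (nat \<Rightarrow> quat) set \<Rightarrow> nat \<Rightarrow> nat \<Rightarrow> bool" where
  "rel K X i j \<longleftrightarrow> (\<exists>a\<in>K. \<forall>x\<in>X. x j = a * x i)"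
definition blk :: "nat \<Rightarrow> quat set \<Rightarrow> (nat \<Rightarrow> quat) set \<Rightarrow> nat \<Rightarrow> nat set" where
  "blk n K X i = {j. j < n \<and> rel K X i j}"
definition Zs :: "nat \<Rightarrow> (nat \<Rightarrow> quat) set \<Rightarrow> nat set" where
  "Zs n X = {i. i < n \<and> (\<forall>x\<in>X. x i = 0)}"
definition coef :: "quat set \<Rightarrow> (nat \<Rightarrow> quat) set \<Rightarrow> nat \<Rightarrow> nat \<Rightarrow> quat" where
  "coef K X i j = (SOME a. a \<in> K \<and> (\<forall>x\<in>X. x j = a * x i))"
definition xiX :: "nat \<Rightarrow> quat set \<Rightarrow> (nat \<Rightarrow> quat) set \<Rightarrow> nat \<Rightarrow> nat \<Rightarrow> quat" where
  "xiX n K X i = (\<lambda>j. if j \<in> blk n K X i then inverse (coef K X i j) else 0)"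
definition clo :: "nat \<Rightarrow> quat set \<Rightarrow> (nat \<Rightarrow> quat) set \<Rightarrow> (nat set \<times> (nat \<Rightarrow> quat) set) set" where
  "clo n K X = {(blk n K X i, kclass K (xiX n K X i)) | i. i < n \<and> i \<notin> Zs n X \<and> i = Min (blk n K X i)}"

context
  fixes n :: nat and K :: "quat set" and X :: "(nat \<Rightarrow> quat) set"
  assumes K: "quat_subgroup K"
begin

lemma rel_refl: "rel K X i i"
  unfolding rel_def using qsK(3)[OF K] by (intro bexI[of _ 1]) auto

lemma rel_sym: "rel K X i j \<Longrightarrow> rel K X j i"
proof -
  assume "rel K X i j"
  then obtain a where a: "a \<in> K" "\<forall>x\<in>X. x j = a * x i" unfolding rel_def by blast
  have a0: "a \<noteq> 0" using qsK(1)[OF K a(1)] .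
  have "\<forall>x\<in>X. x i = inverse a * x j"
  proof
    fix x assume "x \<in> X"
    then have "x j = a * x i" using a by blast
    then show "x i = inverse a * x j" using a0 by (simp add: mult.assoc[symmetric])
  qed
  then show "rel K X j i" unfolding rel_def using qsK(2)[OF K a(1)] by blast
qed

lemma rel_trans: "rel K X i j \<Longrightarrow> rel K X j l \<Longrightarrow> rel K X i l"
proof -
  assume "rel K X i j" "rel K X j l"
  then obtain a b where a: "a \<in> K" "\<forall>x\<in>X. x j = a * x i" "b \<in> K" "\<forall>x\<in>X. x l = b * x j"
    unfolding rel_def by blast
  then have "\<forall>x\<in>X. x l = (b * a) * x i" by (simp add: mult.assoc)
  then show "rel K X i l" unfolding rel_def using qsK(4)[OF K a(3) a(1)] by blast
qed

lemma blk_self: "i < n \<Longrightarrow> i \<in> blk n K X i"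
  unfolding blk_def using rel_refl by simp

lemma blk_eq: "j \<in> blk n K X i \<Longrightarrow> blk n K X j = blk n K X i"
  unfolding blk_def using rel_sym rel_trans by blast

lemma blk_sub: "blk n K X i \<subseteq> {..<n}"
  unfolding blk_def by auto

lemma blk_fin: "finite (blk n K X i)"
  by (rule finite_subset[OF blk_sub]) simp

lemma blk_nonZ: "i < n \<Longrightarrow> i \<notin> Zs n X \<Longrightarrow> j \<in> blk n K X i \<Longrightarrow> j \<notin> Zs n X"
proof
  assume i: "i < n" "i \<notin> Zs n X" and j: "j \<in> blk n K X i" and jz: "j \<in> Zs n X"
  obtain a where a: "a \<in> K" "\<forall>x\<in>X. x j = a * x i" using j unfolding blk_def rel_def by blast
  have a0: "a \<noteq> 0" using qsK(1)[OF K a(1)] .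
  have "\<forall>x\<in>X. x i = 0"
  proof
    fix x assume x: "x \<in> X"
    then have "a * x i = 0" using a(2) jz unfolding Zs_def by force
    then show "x i = 0" using a0 by simp
  qed
  then show False using i unfolding Zs_def by simp
qed

lemma coef_spec: "j \<in> blk n K X i \<Longrightarrow> coef K X i j \<in> K \<and> (\<forall>x\<in>X. x j = coef K X i j * x i)"
  unfolding blk_def rel_def coef_def by (rule someI_ex) blast

lemma coef_unique:
  assumes i: "i < n" "i \<notin> Zs n X" and a: "\<forall>x\<in>X. x j = a * x i" and j: "j \<in> blk n K X i"
  shows "coef K X i j = a"
proof -
  obtain x where x: "x \<in> X" "x i \<noteq> 0" using i unfolding Zs_def by blast
  have "a * x i = coef K X i j * x i" using a coef_spec[OF j] x by metis
  then have "a * x i * inverse (x i) = coef K X i j * x i * inverse (x i)" by simp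
  then show ?thesis using x(2) by (simp add: mult.assoc)
qed

lemma min_rep:
  assumes i: "i < n" "i \<notin> Zs n X"
  shows "(blk n K X i, kclass K (xiX n K X (Min (blk n K X i)))) \<in> clo n K X"
    "blk n K X (Min (blk n K X i)) = blk n K X i"
proof -
  define r where "r = Min (blk n K X i)"
  have r: "r \<in> blk n K X i" unfolding r_def using Min_in[OF blk_fin] blk_self[OF i(1)] by blast
  have br: "blk n K X r = blk n K X i" using blk_eq[OF r] .
  have "r < n" using r blk_sub by auto
  moreover have "r \<notin> Zs n X" using blk_nonZ[OF i(1) i(2) r] .
  moreover have "r = Min (blk n K X r)" using br r_def by simp
  ultimately have "(blk n K X r, kclass K (xiX n K X r)) \<in> clo n K X" unfolding clo_def by blast
  then show "(blk n K X i, kclass K (xiX n K X (Min (blk n K X i)))) \<in> clo n K X"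
    using br r_def by simp
  show "blk n K X (Min (blk n K X i)) = blk n K X i" using br r_def by simp
qed

lemma cloD:
  assumes "(B, C) \<in> clo n K X"
  obtains i where "i < n" "i \<notin> Zs n X" "i = Min (blk n K X i)" "B = blk n K X i"
    "C = kclass K (xiX n K X i)"
  using assms unfolding clo_def by blast

lemma clo_dowling: "clo n K X \<in> dowling n K"
proof -
have A: "B \<noteq> {} \<and> B \<subseteq> {..<n} \<and> (\<exists>\<xi>\<in>kfuns K B. C = kclass K \<xi>)" if bc: "(B, C) \<in> clo n K X" for B C
proof -
  obtain i where i: "i < n" "i \<notin> Zs n X" "i = Min (blk n K X i)" "B = blk n K X i"
    "C = kclass K (xiX n K X i)" using bc by (rule cloD)
  have "xiX n K X i \<in> kfuns K B"
    unfolding kfuns_def xiX_def i(4) using coef_spec qsK(2)[OF K] by auto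
  then show "B \<noteq> {} \<and> B \<subseteq> {..<n} \<and> (\<exists>\<xi>\<in>kfuns K B. C = kclass K \<xi>)"
    using blk_self[OF i(1)] blk_sub i(4,5) by blast
qed
have B: "fst b1 \<inter> fst b2 = {}" if b: "b1 \<in> clo n K X" "b2 \<in> clo n K X" "b1 \<noteq> b2" for b1 b2
proof -
  obtain B1 C1 B2 C2 where e: "b1 = (B1, C1)" "b2 = (B2, C2)" by (cases b1, cases b2) auto
  obtain i1 where i1: "i1 < n" "i1 \<notin> Zs n X" "i1 = Min (blk n K X i1)" "B1 = blk n K X i1"
    "C1 = kclass K (xiX n K X i1)" using b(1) e(1) cloD by metis
  obtain i2 where i2: "i2 < n" "i2 \<notin> Zs n X" "i2 = Min (blk n K X i2)" "B2 = blk n K X i2"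
    "C2 = kclass K (xiX n K X i2)" using b(2) e(2) cloD by metis
  show "fst b1 \<inter> fst b2 = {}"
  proof (rule ccontr)
    assume "fst b1 \<inter> fst b2 \<noteq> {}"
    then obtain j where "j \<in> blk n K X i1" "j \<in> blk n K X i2" using e i1 i2 by auto
    then have "blk n K X i1 = blk n K X i2" using blk_eq by metis
    then have "i1 = i2" using i1(3) i2(3) by simp
    then show False using b(3) e i1 i2 by simp
  qed
qed
show ?thesis unfolding dowling_def using A B by blast
qed

lemma clo_support: "i < n \<Longrightarrow> i \<in> \<Union>(fst ` clo n K X) \<longleftrightarrow> i \<notin> Zs n X"
proof
  assume "i < n" "i \<in> \<Union>(fst ` clo n K X)"
  then obtain b where b: "b \<in> clo n K X" "i \<in> fst b" by blast
  obtain B C where bc: "b = (B, C)" by (cases b)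
  obtain r where r: "r < n" "r \<notin> Zs n X" "B = blk n K X r"
    using b(1) unfolding bc by (rule cloD)
  show "i \<notin> Zs n X" using blk_nonZ[OF r(1,2)] b(2) bc r(3) by simp
next
  assume i: "i < n" "i \<notin> Zs n X"
  have "blk n K X i \<in> fst ` clo n K X"
    using min_rep(1)[OF i] by (rule rev_image_eqI) simp
  then show "i \<in> \<Union>(fst ` clo n K X)" using blk_self[OF i(1)] by blast
qed

lemma xiX_mul: "j \<in> blk n K X i \<Longrightarrow> x \<in> X \<Longrightarrow> xiX n K X i j * x j = x i"
proof -
  assume j: "j \<in> blk n K X i" and x: "x \<in> X"
  have c: "coef K X i j \<in> K" "x j = coef K X i j * x i" using coef_spec[OF j] x by auto
  have "coef K X i j \<noteq> 0" using qsK(1)[OF K c(1)] .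
  then show ?thesis using j c(2) unfolding xiX_def by (simp add: mult.assoc[symmetric])
qed

lemma X_sub_clo:
  assumes X: "X \<subseteq> qvecs n"
  shows "X \<subseteq> Phi n (clo n K X)"
proof
  fix x assume x: "x \<in> X"
  show "x \<in> Phi n (clo n K X)"
  proof (rule PhiI)
    show "x \<in> qvecs n" using X x by blast
    show "x i = 0" if "i < n" "i \<notin> \<Union>(fst ` clo n K X)" for i
    proof -
      have "i \<in> Zs n X" using clo_support[OF that(1)] that(2) by blast
      then show ?thesis using x unfolding Zs_def by blast
    qed
    show "\<xi> i * x i = \<xi> j * x j" if b: "(B, C) \<in> clo n K X" "\<xi> \<in> C" "i \<in> B" "j \<in> B" for B C \<xi> i j
    proof -
      obtain r where r: "r < n" "r \<notin> Zs n X" "r = Min (blk n K X r)" "B = blk n K X r" "C = kclass K (xiX n K X r)"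
        using b(1) by (rule cloD)
      obtain g where g: "\<xi> = (\<lambda>l. g * xiX n K X r l)" using kclassD b(2) r(5) by blast
      show ?thesis using g xiX_mul[OF _ x] b(3,4) r(4) by (simp add: mult.assoc)
    qed
  qed
qed

lemma stab_clo:
  assumes X: "X \<subseteq> qvecs n" and g: "g \<in> Gn n K H" and fx: "\<forall>x\<in>X. mvec n g x = x"
    and y: "y \<in> Phi n (clo n K X)"
  shows "mvec n g y = y"
proof -
  obtain p c where pc: "p permutes {..<n}" "\<forall>l<n. c l \<in> K" "g = Mm n p c"
    using G_mono[OF K g] unfolding monoK_def by blast
  have yq: "y \<in> qvecs n" using PhiD(1)[OF y] .
  have yZ: "y i = 0" if iz: "i \<in> Zs n X" for i
  proof -
    have "i < n" using iz unfolding Zs_def by blast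
    then show ?thesis using iz clo_support PhiD(2)[OF y] by blast
  qed
  show ?thesis
  proof (rule ext)
    fix k
    show "mvec n g y k = y k"
    proof (cases "k < n")
      case False
      then show ?thesis using yq unfolding pc(3) mvec_Mm[OF pc(1)] qvecs_def by simp
    next
      case True
      define m where "m = inv p k"
      have m: "m < n" "p m = k" using True perm_inv_lt[OF pc(1)] permutes_inverses[OF pc(1)]
        unfolding m_def by auto
      have cm: "c m \<in> K" "c m \<noteq> 0" using pc(2) m(1) qsK(1)[OF K] by auto
      have fxk: "c m * x m = x k" if xX: "x \<in> X" for x
      proof -
        have "mvec n g x k = x k" using fx xX by simp
        then show ?thesis unfolding pc(3) mvec_Mm[OF pc(1)] m_def using True by simp
      qed
      have xm: "x m = inverse (c m) * x k" if "x \<in> X" for x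
        using fxk[OF that] cm(2) by (metis mult.assoc left_inverse mult_1_left)
      have lhs: "mvec n g y k = c m * y m" unfolding pc(3) mvec_Mm[OF pc(1)] m_def using True by simp
      show ?thesis
      proof (cases "k \<in> Zs n X")
        case True
        have "\<forall>x\<in>X. x m = 0"
        proof
          fix x assume xX: "x \<in> X"
          have "x k = 0" using True xX unfolding Zs_def by blast
          then show "x m = 0" using xm[OF xX] by simp
        qed
        then have "m \<in> Zs n X" using m(1) unfolding Zs_def by blast
        then show ?thesis using lhs yZ True by simp
      next
        case False
        have mk: "m \<in> blk n K X k" unfolding blk_def rel_def using m(1) xm qsK(2)[OF K cm(1)] by blast
        define r where "r = Min (blk n K X k)"
        have mr: "(blk n K X k, kclass K (xiX n K X r)) \<in> clo n K X" "blk n K X r = blk n K X k"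
          using min_rep[OF \<open>k < n\<close> False] unfolding r_def by auto
        have r: "r \<in> blk n K X k" unfolding r_def using Min_in[OF blk_fin] blk_self[OF \<open>k < n\<close>] by blast
        have rn: "r < n" "r \<notin> Zs n X" using r blk_sub blk_nonZ[OF \<open>k < n\<close> False r] by auto
        have kr: "k \<in> blk n K X r" "m \<in> blk n K X r" using mr(2) blk_self[OF \<open>k < n\<close>] mk by auto
        have ck: "coef K X r k \<in> K" "\<forall>x\<in>X. x k = coef K X r k * x r" using coef_spec[OF kr(1)] by auto
        have ck0: "coef K X r k \<noteq> 0" using qsK(1)[OF K ck(1)] .
        have "\<forall>x\<in>X. x m = (inverse (c m) * coef K X r k) * x r" using xm ck(2) by (simp add: mult.assoc)
        then have cmr: "coef K X r m = inverse (c m) * coef K X r k" using coef_unique[OF rn _ kr(2)] by blast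
        have "xiX n K X r k * y k = xiX n K X r m * y m"
          using PhiD(3)[OF y mr(1) kclass_self[OF K] blk_self[OF \<open>k < n\<close>] mk] .
        then have "inverse (coef K X r k) * y k = inverse (inverse (c m) * coef K X r k) * y m"
          using kr cmr unfolding xiX_def by simp
        also have "\<dots> = inverse (coef K X r k) * (c m * y m)"
          using cm(2) ck0 by (simp add: nonzero_inverse_mult_distrib mult.assoc)
        finally have "coef K X r k * (inverse (coef K X r k) * y k) = coef K X r k * (inverse (coef K X r k) * (c m * y m))"
          by simp
        then have "y k = c m * y m" using ck0 by (simp add: mult.assoc[symmetric])
        then show ?thesis using lhs by simp
      qed
    qed
  qed
qed

end



definition dref :: "nat \<Rightarrow> quat \<Rightarrow> nat \<Rightarrow> nat \<Rightarrow> nat \<Rightarrow> quat" where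
  "dref n h i = Mm n id (\<lambda>l. if l = i then h else 1)"
definition tref :: "nat \<Rightarrow> quat \<Rightarrow> nat \<Rightarrow> nat \<Rightarrow> nat \<Rightarrow> nat \<Rightarrow> quat" where
  "tref n a i j = Mm n (transpose i j) (\<lambda>l. if l = i then inverse a else if l = j then a else 1)"

lemma prod_list_one:
  "distinct xs \<Longrightarrow> prod_list (map (\<lambda>l. if l = i then h else (1::quat)) xs) = (if i \<in> set xs then h else 1)"
  by (induction xs) auto

lemma prod_list_two:
  assumes "i \<noteq> j" "(a::quat) \<noteq> 0"
  shows "distinct xs \<Longrightarrow> prod_list (map (\<lambda>l. if l = i then inverse a else if l = j then a else 1) xs) =
    (if i \<in> set xs then (if j \<in> set xs then 1 else inverse a) else (if j \<in> set xs then a else 1))"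
  by (induction xs) (use assms in auto)

lemma mvec_dref: "mvec n (dref n h i) v = (\<lambda>k. if k < n then (if k = i then h else 1) * v k else 0)"
  unfolding dref_def mvec_Mm[OF permutes_id] by (simp only: inv_id id_apply)

lemma mvec_tref:
  assumes "i < n" "j < n" "i \<noteq> j"
  shows "mvec n (tref n a i j) v =
    (\<lambda>k. if k < n then (if k = i then a * v j else if k = j then inverse a * v i else v k) else 0)"
proof -
  have p: "transpose i j permutes {..<n}" using assms by (intro permutes_swap_id) auto
  show ?thesis unfolding tref_def mvec_Mm[OF p] inv_transpose_eq
    using assms by (intro ext) (auto simp: transpose_def)
qed

lemma mmul_idm_Mm: "p permutes {..<n} \<Longrightarrow> mmul n (Mm n p c) (idm n) = Mm n p c"
  unfolding idm_Mm by (subst mmul_Mm) (auto intro!: Mm_cong)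

lemma dref_G:
  assumes K: "quat_subgroup K" and HK: "H \<subseteq> K" and h: "h \<in> H" and i: "i < n"
  shows "dref n h i \<in> Gn n K H"
proof -
  have "dref n h i \<in> An n K H"
    unfolding An_def dref_def diagm_Mm
    apply (rule CollectI, rule exI[of _ "\<lambda>l. if l = i then h else 1"])
    using prod_list_one[of "[0..<n]" i h] h HK qsK(3)[OF K] i by auto
  then have "mmul n (dref n h i) (idm n) \<in> Gn n K H" unfolding Gn_def
    by (intro gen_group.gen_mul gen_group.gen_id) auto
  then show ?thesis unfolding dref_def using mmul_idm_Mm[OF permutes_id] by simp
qed

lemma tref_G:
  assumes K: "quat_subgroup K" and H: "quat_subgroup H" and a: "a \<in> K" and ij: "i < n" "j < n" "i \<noteq> j"
  shows "tref n a i j \<in> Gn n K H"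
proof -
  define d where "d = (\<lambda>l. if l = i then inverse a else if l = j then a else (1::quat))"
  have a0: "a \<noteq> 0" using qsK(1)[OF K a] .
  have p: "transpose i j permutes {..<n}" using ij by (intro permutes_swap_id) auto
  have "prod_list (map d [0..<n]) = 1" unfolding d_def using prod_list_two[OF ij(3) a0, of "[0..<n]"] ij by simp
  then have "Mm n id d \<in> An n K H"
  proof -
    have "\<forall>l<n. d l \<in> K" using qsK(2,3)[OF K] a by (auto simp: d_def)
    moreover have "prod_list (map d [0..<n]) \<in> H" using \<open>prod_list (map d [0..<n]) = 1\<close> qsK(3)[OF H] by simp
    ultimately show ?thesis unfolding An_def diagm_Mm by blast
  qed
  then have "mmul n (Mm n id d) (idm n) \<in> Gn n K H" unfolding Gn_def
    by (intro gen_group.gen_mul gen_group.gen_id) auto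
  then have "Mm n id d \<in> Gn n K H" using mmul_idm_Mm[OF permutes_id] by simp
  then have "mmul n (permm n (transpose i j)) (Mm n id d) \<in> Gn n K H" unfolding Gn_def
    using p by (intro gen_group.gen_mul) auto
  moreover have "mmul n (permm n (transpose i j)) (Mm n id d) = tref n a i j"
    unfolding permm_Mm mmul_Mm[OF p permutes_id] tref_def d_def by simp
  ultimately show ?thesis by simp
qed

lemma finite_order:
  assumes K: "quat_subgroup K" and fin: "finite K" and h: "h \<in> K"
  shows "\<exists>m>0. h ^ m = 1"
proof -
  have pw: "h ^ k \<in> K" for k by (induction k) (auto simp: qsK[OF K] h)
  have "\<not> inj (\<lambda>k::nat. h ^ k)"
  proof
    assume "inj (\<lambda>k::nat. h ^ k)"
    then have "infinite (range (\<lambda>k::nat. h ^ k))" using finite_imageD infinite_UNIV_nat by blast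
    moreover have "range (\<lambda>k::nat. h ^ k) \<subseteq> K" using pw by auto
    ultimately show False using fin finite_subset by blast
  qed
  then obtain a b :: nat where ab: "a \<noteq> b" "h ^ a = h ^ b" unfolding inj_def by blast
  have main: "\<exists>m>0. h ^ m = 1" if "a < b" "h ^ a = h ^ b" for a b :: nat
  proof -
    have h0: "h ^ a \<noteq> 0" using qsK(1)[OF K pw] by blast
    have "h ^ a * h ^ (b - a) = h ^ (a + (b - a))" by (simp only: power_add)
    also have "\<dots> = h ^ b" using that(1) by simp
    also have "\<dots> = h ^ a" using that(2) by simp
    finally have e: "h ^ a * h ^ (b - a) = h ^ a" .
    have "h ^ (b - a) = inverse (h ^ a) * (h ^ a * h ^ (b - a))"
      by (metis mult.assoc left_inverse[OF h0] mult_1_left)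
    also have "\<dots> = 1" unfolding e using left_inverse[OF h0] .
    finally have "h ^ (b - a) = 1" .
    then show ?thesis using that by (intro exI[of _ "b - a"]) simp
  qed
  show ?thesis
  proof (cases "a < b")
    case True then show ?thesis using main ab by blast
  next
    case False then have "b < a" using ab by simp
    then show ?thesis using main ab by metis
  qed
qed

lemma mpow_dref: "mpow n (dref n h i) m = dref n (h ^ m) i"
proof -
  have "((mmul n (dref n h i)) ^^ m) (idm n) = dref n (h ^ m) i"
  proof (induction m)
    case 0 then show ?case unfolding dref_def idm_Mm by (auto intro: Mm_cong)
  next
    case (Suc m)
    then show ?case unfolding dref_def
      by (simp add: mmul_Mm[OF permutes_id permutes_id]) (auto intro!: Mm_cong simp: power_commutes)
  qed
  then show ?thesis unfolding mpow_def .
qed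

lemma refl_dref:
  assumes K: "quat_subgroup K" and fin: "finite K" and HK: "H \<subseteq> K" and h: "h \<in> H" "h \<noteq> 1"
    and i: "i < n"
  shows "is_reflection n (Gn n K H) (dref n h i)"
  unfolding is_reflection_def
proof (intro conjI)
  show "dref n h i \<in> Gn n K H" using dref_G[OF K HK h(1) i] .
  obtain m where m: "m > 0" "h ^ m = 1" using finite_order[OF K fin] h HK by blast
  have "mpow n (dref n h i) m = idm n" unfolding mpow_dref m(2) unfolding dref_def idm_Mm
    by (auto intro: Mm_cong)
  then show "\<exists>m>0. mpow n (dref n h i) m = idm n" using m(1) by blast
  define w where "w = (\<lambda>k. if k = i then (1::quat) else 0)"
  have h1: "1 - h \<noteq> 0" using h(2) by simp
  have img: "(\<lambda>k. v k - mvec n (dref n h i) v k) = (\<lambda>k. w k * ((1 - h) * v i))" if v: "v \<in> qvecs n" for v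
    using v i unfolding mvec_dref w_def qvecs_def by (auto simp: algebra_simps)
  show "\<exists>w\<in>qvecs n. w \<noteq> (\<lambda>_. 0) \<and>
        (\<lambda>v k. v k - mvec n (dref n h i) v k) ` qvecs n = {\<lambda>i. w i * q |q. True}"
  proof (intro bexI[of _ w] conjI)
    show "w \<in> qvecs n" using i unfolding w_def qvecs_def by auto
    show "w \<noteq> (\<lambda>_. 0)" unfolding w_def by (metis one_neq_zero)
    show "(\<lambda>v k. v k - mvec n (dref n h i) v k) ` qvecs n = {\<lambda>i. w i * q |q. True}"
    proof
      show "(\<lambda>v k. v k - mvec n (dref n h i) v k) ` qvecs n \<subseteq> {\<lambda>i. w i * q |q. True}"
        using img by blast
      show "{\<lambda>i. w i * q |q. True} \<subseteq> (\<lambda>v k. v k - mvec n (dref n h i) v k) ` qvecs n"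
      proof clarify
        fix q :: quat
        define v where "v = (\<lambda>k. if k = i then inverse (1 - h) * q else 0)"
        have v: "v \<in> qvecs n" using i unfolding v_def qvecs_def by auto
        have "(\<lambda>k. w k * q) = (\<lambda>k. w k * ((1 - h) * v i))"
          unfolding v_def using h1 by (simp add: mult.assoc[symmetric])
        also have "\<dots> = (\<lambda>k. v k - mvec n (dref n h i) v k)" using img[OF v] by simp
        finally show "(\<lambda>k. w k * q) \<in> (\<lambda>v k. v k - mvec n (dref n h i) v k) ` qvecs n"
          using v by blast
      qed
    qed
  qed
qed

lemma refl_tref:
  assumes K: "quat_subgroup K" and H: "quat_subgroup H" and a: "a \<in> K" and ij: "i < n" "j < n" "i \<noteq> j"
  shows "is_reflection n (Gn n K H) (tref n a i j)"
  unfolding is_reflection_def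
proof (intro conjI)
  have a0: "a \<noteq> 0" using qsK(1)[OF K a] .
  show "tref n a i j \<in> Gn n K H" using tref_G[OF K H a ij] .
  have p: "transpose i j permutes {..<n}" using ij by (intro permutes_swap_id) auto
  define d where "d = (\<lambda>l. if l = i then inverse a else if l = j then a else (1::quat))"
  have T: "tref n a i j = Mm n (transpose i j) d" unfolding tref_def d_def ..
  have "mpow n (tref n a i j) 2 = mmul n (tref n a i j) (mmul n (tref n a i j) (idm n))"
    unfolding mpow_def by (simp add: numeral_2_eq_2)
  also have "\<dots> = mmul n (Mm n (transpose i j) d) (Mm n (transpose i j) d)"
    unfolding T mmul_idm_Mm[OF p] ..
  also have "\<dots> = Mm n (transpose i j \<circ> transpose i j) (\<lambda>l. d (transpose i j l) * d l)"
    by (rule mmul_Mm[OF p p])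
  also have "\<dots> = idm n" unfolding idm_Mm
    by (rule Mm_cong) (use a0 ij in \<open>auto simp: d_def transpose_def\<close>)
  finally have "mpow n (tref n a i j) 2 = idm n" .
  then show "\<exists>m>0. mpow n (tref n a i j) m = idm n" by (intro exI[of _ 2]) simp
  define w where "w = (\<lambda>k. if k = i then (1::quat) else if k = j then - inverse a else 0)"
  have img: "(\<lambda>k. v k - mvec n (tref n a i j) v k) = (\<lambda>k. w k * (v i - a * v j))" if v: "v \<in> qvecs n" for v
  proof
    fix k
    have ia: "inverse a * (a * x) = x" for x using a0 by (simp add: mult.assoc[symmetric])
    have vk: "v k = 0" if "\<not> k < n" using v that unfolding qvecs_def by auto
    show "v k - mvec n (tref n a i j) v k = w k * (v i - a * v j)"
    proof (cases "k < n")
      case False then show ?thesis using vk ij unfolding mvec_tref[OF ij] w_def by auto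
    next
      case True
      show ?thesis
      proof (cases "k = i")
        case True then show ?thesis using ij unfolding mvec_tref[OF ij] w_def by simp
      next
        case ki: False
        show ?thesis
        proof (cases "k = j")
          case True
          have "- inverse a * (v i - a * v j) = - (inverse a * v i) + inverse a * (a * v j)"
            by (simp add: algebra_simps)
          then have "- inverse a * (v i - a * v j) = v j - inverse a * v i" unfolding ia by simp
          then show ?thesis using ij True unfolding mvec_tref[OF ij] w_def by simp
        next
          case False then show ?thesis using ki \<open>k < n\<close> unfolding mvec_tref[OF ij] w_def by simp
        qed
      qed
    qed
  qed
  show "\<exists>w\<in>qvecs n. w \<noteq> (\<lambda>_. 0) \<and>
        (\<lambda>v k. v k - mvec n (tref n a i j) v k) ` qvecs n = {\<lambda>i. w i * q |q. True}"
  proof (intro bexI[of _ w] conjI)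
    show "w \<in> qvecs n" using ij unfolding w_def qvecs_def by auto
    show "w \<noteq> (\<lambda>_. 0)" unfolding w_def by (metis one_neq_zero)
    show "(\<lambda>v k. v k - mvec n (tref n a i j) v k) ` qvecs n = {\<lambda>i. w i * q |q. True}"
    proof
      show "(\<lambda>v k. v k - mvec n (tref n a i j) v k) ` qvecs n \<subseteq> {\<lambda>i. w i * q |q. True}"
        using img by blast
      show "{\<lambda>i. w i * q |q. True} \<subseteq> (\<lambda>v k. v k - mvec n (tref n a i j) v k) ` qvecs n"
      proof clarify
        fix q :: quat
        define v where "v = (\<lambda>k. if k = i then q else 0)"
        have v: "v \<in> qvecs n" using ij unfolding v_def qvecs_def by auto
        have "(\<lambda>k. w k * q) = (\<lambda>k. w k * (v i - a * v j))"
          unfolding v_def using ij by simp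
        also have "\<dots> = (\<lambda>k. v k - mvec n (tref n a i j) v k)" using img[OF v] by simp
        finally show "(\<lambda>k. w k * q) \<in> (\<lambda>v k. v k - mvec n (tref n a i j) v k) ` qvecs n"
          using v by blast
      qed
    qed
  qed
qed



lemma separate:
  assumes K: "quat_subgroup K" and fin: "finite K" and H: "quat_subgroup H" and HK: "H \<subseteq> K"
    and h: "h \<in> H" "h \<noteq> 1" and \<pi>: "\<pi> \<in> dowling n K"
    and x: "x \<in> qvecs n" "x \<notin> Phi n \<pi>"
  shows "\<exists>g. is_reflection n (Gn n K H) g \<and> Phi n \<pi> \<subseteq> fixspace n g \<and> x \<notin> fixspace n g"
proof (cases "\<exists>i. i < n \<and> i \<notin> \<Union>(fst ` \<pi>) \<and> x i \<noteq> 0")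
  case True
  then obtain i where i: "i < n" "i \<notin> \<Union>(fst ` \<pi>)" "x i \<noteq> 0" by blast
  have "Phi n \<pi> \<subseteq> fixspace n (dref n h i)"
  proof
    fix y assume y: "y \<in> Phi n \<pi>"
    have yq: "y \<in> qvecs n" and yi: "y i = 0" using PhiD(1,2)[OF y] i by auto
    have "mvec n (dref n h i) y = y"
      unfolding mvec_dref using yq yi unfolding qvecs_def by (intro ext) auto
    then show "y \<in> fixspace n (dref n h i)" using yq unfolding fixspace_def by blast
  qed
  moreover have "x \<notin> fixspace n (dref n h i)"
  proof
    assume "x \<in> fixspace n (dref n h i)"
    then have "mvec n (dref n h i) x i = x i" unfolding fixspace_def by simp
    then have "h * x i = x i" unfolding mvec_dref using i by simp
    then have "(h - 1) * x i = 0" by (simp add: algebra_simps)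
    then show False using h(2) i(3) by simp
  qed
  ultimately show ?thesis using refl_dref[OF K fin HK h i(1)] by blast
next
  case False
  have "\<not> (\<forall>B C \<xi> i j. (B, C) \<in> \<pi> \<longrightarrow> \<xi> \<in> C \<longrightarrow> i \<in> B \<longrightarrow> j \<in> B \<longrightarrow> \<xi> i * x i = \<xi> j * x j)"
  proof
    assume "\<forall>B C \<xi> i j. (B, C) \<in> \<pi> \<longrightarrow> \<xi> \<in> C \<longrightarrow> i \<in> B \<longrightarrow> j \<in> B \<longrightarrow> \<xi> i * x i = \<xi> j * x j"
    then have "x \<in> Phi n \<pi>" using False x(1) by (intro PhiI) blast+
    then show False using x(2) by blast
  qed
  then obtain B C \<xi> i j where b: "(B, C) \<in> \<pi>" "\<xi> \<in> C" "i \<in> B" "j \<in> B" "\<xi> i * x i \<noteq> \<xi> j * x j"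
    by blast
  have ij: "i < n" "j < n" "i \<noteq> j" using dowD(2)[OF \<pi> b(1)] b by auto
  obtain \<xi>0 where xi0: "\<xi>0 \<in> kfuns K B" "C = kclass K \<xi>0" using dowD(3)[OF \<pi> b(1)] by blast
  obtain g0 where g0: "g0 \<in> K" "\<xi> = (\<lambda>l. g0 * \<xi>0 l)" using kclassD b(2) xi0(2) by blast
  have xiK: "\<xi> l \<in> K" if "l \<in> B" for l using g0 kfunsD(1)[OF xi0(1) that] qsK(4)[OF K] by simp
  have xi0': "\<xi> i \<noteq> 0" using qsK(1)[OF K xiK[OF b(3)]] .
  define a where "a = inverse (\<xi> i) * \<xi> j"
  have aK: "a \<in> K" unfolding a_def using qsK(2,4)[OF K] xiK b(3,4) by blast
  have a0: "a \<noteq> 0" using qsK(1)[OF K aK] .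
  have fixchar: "mvec n (tref n a i j) v = v \<longleftrightarrow> v i = a * v j" if v: "v \<in> qvecs n" for v
  proof
    assume "mvec n (tref n a i j) v = v"
    then have "mvec n (tref n a i j) v i = v i" by simp
    then show "v i = a * v j" unfolding mvec_tref[OF ij] using ij by simp
  next
    assume e: "v i = a * v j"
    have e2: "inverse a * v i = v j" unfolding e using a0 by (simp add: mult.assoc[symmetric])
    show "mvec n (tref n a i j) v = v"
      unfolding mvec_tref[OF ij] using e e2 v unfolding qvecs_def by (intro ext) auto
  qed
  have "Phi n \<pi> \<subseteq> fixspace n (tref n a i j)"
  proof
    fix y assume y: "y \<in> Phi n \<pi>"
    have yq: "y \<in> qvecs n" using PhiD(1)[OF y] .
    have "\<xi> i * y i = \<xi> j * y j" using PhiD(3)[OF y b(1-4)] .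
    then have "inverse (\<xi> i) * (\<xi> i * y i) = inverse (\<xi> i) * (\<xi> j * y j)" by simp
    then have "y i = a * y j" unfolding a_def using xi0' by (simp add: mult.assoc[symmetric])
    then show "y \<in> fixspace n (tref n a i j)" using fixchar[OF yq] yq unfolding fixspace_def by blast
  qed
  moreover have "x \<notin> fixspace n (tref n a i j)"
  proof
    assume "x \<in> fixspace n (tref n a i j)"
    then have "x i = a * x j" using fixchar[OF x(1)] unfolding fixspace_def by blast
    then have "\<xi> i * x i = \<xi> i * (inverse (\<xi> i) * \<xi> j) * x j" unfolding a_def by (simp add: mult.assoc)
    also have "\<dots> = \<xi> j * x j" using xi0' by (simp add: mult.assoc[symmetric])
    finally show False using b(5) by blast
  qed
  ultimately show ?thesis using refl_tref[OF K H aK ij] by blast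
qed

lemma iso_from:
  assumes "bij_betw \<psi> Y X" "\<forall>a\<in>Y. \<forall>b\<in>Y. le' a b \<longleftrightarrow> le (\<psi> a) (\<psi> b)"
  shows "poset_iso X le Y le'"
  unfolding poset_iso_def
proof (intro exI[of _ "inv_into Y \<psi>"] conjI)
  show "bij_betw (inv_into Y \<psi>) X Y" using bij_betw_inv_into[OF assms(1)] .
  show "\<forall>x\<in>X. \<forall>y\<in>X. le x y \<longleftrightarrow> le' (inv_into Y \<psi> x) (inv_into Y \<psi> y)"
  proof (intro ballI)
    fix x y assume xy: "x \<in> X" "y \<in> X"
    have fx: "inv_into Y \<psi> x \<in> Y" "\<psi> (inv_into Y \<psi> x) = x"
      using xy assms(1) bij_betw_imp_surj_on f_inv_into_f inv_into_into by metis+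
    have fy: "inv_into Y \<psi> y \<in> Y" "\<psi> (inv_into Y \<psi> y) = y"
      using xy assms(1) bij_betw_imp_surj_on f_inv_into_f inv_into_into by metis+
    show "le x y \<longleftrightarrow> le' (inv_into Y \<psi> x) (inv_into Y \<psi> y)"
      using assms(2) fx fy by metis
  qed
qed



theorem corollary4p6:
  fixes K H :: "quat set" and n :: nat
  assumes "finite K" and "quat_subgroup K" and "quat_subgroup H" and "H \<subseteq> K"
    and "\<forall>k\<in>K. \<forall>h\<in>H. k * h * inverse k \<in> H"
    and "\<forall>a\<in>K. \<forall>b\<in>K. a * b * inverse a * inverse b \<in> H"
    and "H \<noteq> {1}" and "n \<ge> 3"
  shows "poset_iso (parabolics n (Gn n K H)) (\<subseteq>) (dowling n K) dowling_le
       \<and> poset_iso (intersection_lattice n (Gn n K H)) (\<lambda>X Y. Y \<subseteq> X) (dowling n K) dowling_le"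
proof -
  note fin = assms(1) and K = assms(2) and H = assms(3) and HK = assms(4)
  define G where "G = Gn n K H"
  obtain h where h: "h \<in> H" "h \<noteq> 1" using assms(7) qsK(3)[OF H] by blast
  have sep: "\<exists>g. is_reflection n G g \<and> Phi n \<pi> \<subseteq> fixspace n g \<and> x \<notin> fixspace n g"
    if "\<pi> \<in> dowling n K" "x \<in> qvecs n" "x \<notin> Phi n \<pi>" for \<pi> x
    unfolding G_def using separate[OF K fin H HK h that] .
  have reflG: "g \<in> G" if "is_reflection n G g" for g using that unfolding is_reflection_def by blast
  have Phiq: "Phi n \<pi> \<subseteq> qvecs n" for \<pi> using PhiD(1) by blast
  have P2: "pointwise_stab n G (Phi n \<pi>) \<subseteq> pointwise_stab n G (Phi n \<pi>') \<longleftrightarrow> Phi n \<pi>' \<subseteq> Phi n \<pi>"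
    if p: "\<pi> \<in> dowling n K" "\<pi>' \<in> dowling n K" for \<pi> \<pi>'
  proof
    assume sub: "pointwise_stab n G (Phi n \<pi>) \<subseteq> pointwise_stab n G (Phi n \<pi>')"
    show "Phi n \<pi>' \<subseteq> Phi n \<pi>"
    proof
      fix y assume y: "y \<in> Phi n \<pi>'"
      show "y \<in> Phi n \<pi>"
      proof (rule ccontr)
        assume ny: "y \<notin> Phi n \<pi>"
        have yq: "y \<in> qvecs n" using PhiD(1)[OF y] .
        obtain g where g: "is_reflection n G g" "Phi n \<pi> \<subseteq> fixspace n g" "y \<notin> fixspace n g"
          using sep[OF p(1) yq ny] by blast
        have "g \<in> pointwise_stab n G (Phi n \<pi>)"
          using g(2) reflG[OF g(1)] unfolding pointwise_stab_def fixspace_def by blast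
        then have "g \<in> pointwise_stab n G (Phi n \<pi>')" using sub by blast
        then have "mvec n g y = y" using y unfolding pointwise_stab_def by blast
        then show False using g(3) yq unfolding fixspace_def by blast
      qed
    qed
  next
    assume "Phi n \<pi>' \<subseteq> Phi n \<pi>"
    then show "pointwise_stab n G (Phi n \<pi>) \<subseteq> pointwise_stab n G (Phi n \<pi>')"
      unfolding pointwise_stab_def by blast
  qed
  have P1: "parabolics n G = (\<lambda>\<pi>. pointwise_stab n G (Phi n \<pi>)) ` dowling n K"
  proof
    show "parabolics n G \<subseteq> (\<lambda>\<pi>. pointwise_stab n G (Phi n \<pi>)) ` dowling n K"
    proof
      fix P assume "P \<in> parabolics n G"
      then obtain X where X: "X \<subseteq> qvecs n" "P = pointwise_stab n G X" unfolding parabolics_def by blast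
      have "pointwise_stab n G X = pointwise_stab n G (Phi n (clo n K X))"
      proof
        show "pointwise_stab n G X \<subseteq> pointwise_stab n G (Phi n (clo n K X))"
        proof
          fix g assume "g \<in> pointwise_stab n G X"
          then have g: "g \<in> Gn n K H" "\<forall>x\<in>X. mvec n g x = x" unfolding pointwise_stab_def G_def by auto
          have "\<forall>y\<in>Phi n (clo n K X). mvec n g y = y" using stab_clo[OF K X(1) g] by blast
          then show "g \<in> pointwise_stab n G (Phi n (clo n K X))" using g(1) unfolding pointwise_stab_def G_def by blast
        qed
        show "pointwise_stab n G (Phi n (clo n K X)) \<subseteq> pointwise_stab n G X"
          using X_sub_clo[OF K X(1)] unfolding pointwise_stab_def by blast
      qed
      then show "P \<in> (\<lambda>\<pi>. pointwise_stab n G (Phi n \<pi>)) ` dowling n K"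
        using X(2) clo_dowling[OF K] by blast
    qed
    show "(\<lambda>\<pi>. pointwise_stab n G (Phi n \<pi>)) ` dowling n K \<subseteq> parabolics n G"
      using Phiq unfolding parabolics_def by blast
  qed
  have L1: "intersection_lattice n G = Phi n ` dowling n K"
  proof
    show "intersection_lattice n G \<subseteq> Phi n ` dowling n K"
    proof
      fix Y assume "Y \<in> intersection_lattice n G"
      then obtain S where S: "S \<subseteq> arrangement n G" "Y = qvecs n \<inter> \<Inter>S"
        unfolding intersection_lattice_def by blast
      have Yq: "Y \<subseteq> qvecs n" using S(2) by blast
      have "Y = Phi n (clo n K Y)"
      proof
        show "Y \<subseteq> Phi n (clo n K Y)" using X_sub_clo[OF K Yq] .
        show "Phi n (clo n K Y) \<subseteq> Y"
        proof
          fix y assume y: "y \<in> Phi n (clo n K Y)"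
          have yq: "y \<in> qvecs n" using PhiD(1)[OF y] .
          have "y \<in> F" if F: "F \<in> S" for F
          proof -
            obtain g where g: "F = fixspace n g" "is_reflection n G g"
              using S(1) F unfolding arrangement_def by blast
            have "\<forall>x\<in>Y. mvec n g x = x" using S(2) F g(1) unfolding fixspace_def by blast
            then have "mvec n g y = y" using stab_clo[OF K Yq _ _ y] reflG[OF g(2)] unfolding G_def by blast
            then show ?thesis using g(1) yq unfolding fixspace_def by blast
          qed
          then show "y \<in> Y" using S(2) yq by blast
        qed
      qed
      then show "Y \<in> Phi n ` dowling n K" using clo_dowling[OF K] by blast
    qed
    show "Phi n ` dowling n K \<subseteq> intersection_lattice n G"
    proof
      fix Y assume "Y \<in> Phi n ` dowling n K"
      then obtain \<pi> where p: "\<pi> \<in> dowling n K" "Y = Phi n \<pi>" by blast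
      define S where "S = {fixspace n g | g. is_reflection n G g \<and> Phi n \<pi> \<subseteq> fixspace n g}"
      have "S \<subseteq> arrangement n G" unfolding S_def arrangement_def by auto
      moreover have "Phi n \<pi> = qvecs n \<inter> \<Inter>S"
      proof
        show "Phi n \<pi> \<subseteq> qvecs n \<inter> \<Inter>S"
        proof
          fix y assume y: "y \<in> Phi n \<pi>"
          have "y \<in> F" if "F \<in> S" for F using that y unfolding S_def by auto
          then show "y \<in> qvecs n \<inter> \<Inter>S" using Phiq y by blast
        qed
        show "qvecs n \<inter> \<Inter>S \<subseteq> Phi n \<pi>"
        proof
          fix x assume x: "x \<in> qvecs n \<inter> \<Inter>S"
          show "x \<in> Phi n \<pi>"
          proof (rule ccontr)
            assume "x \<notin> Phi n \<pi>"
            then obtain g where g: "is_reflection n G g" "Phi n \<pi> \<subseteq> fixspace n g" "x \<notin> fixspace n g"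
              using sep[OF p(1)] x by blast
            then have "fixspace n g \<in> S" unfolding S_def by blast
            then show False using x g(3) by blast
          qed
        qed
      qed
      ultimately show "Y \<in> intersection_lattice n G" unfolding intersection_lattice_def p(2) by blast
    qed
  qed
  have inj: "inj_on (Phi n) (dowling n K)"
    using Phi_inj[OF K] by (intro inj_onI) blast
  have inj2: "inj_on (\<lambda>\<pi>. pointwise_stab n G (Phi n \<pi>)) (dowling n K)"
  proof (rule inj_onI)
    fix \<pi> \<pi>' assume p: "\<pi> \<in> dowling n K" "\<pi>' \<in> dowling n K"
      and e: "pointwise_stab n G (Phi n \<pi>) = pointwise_stab n G (Phi n \<pi>')"
    have "Phi n \<pi> = Phi n \<pi>'" using P2[OF p] P2[OF p(2) p(1)] e by blast
    then show "\<pi> = \<pi>'" using Phi_inj[OF K p] by blast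
  qed
  have iso1: "poset_iso (parabolics n G) (\<subseteq>) (dowling n K) dowling_le"
  proof (rule iso_from)
    show "bij_betw (\<lambda>\<pi>. pointwise_stab n G (Phi n \<pi>)) (dowling n K) (parabolics n G)"
      unfolding bij_betw_def using inj2 P1 by blast
    show "\<forall>a\<in>dowling n K. \<forall>b\<in>dowling n K. dowling_le a b \<longleftrightarrow>
        pointwise_stab n G (Phi n a) \<subseteq> pointwise_stab n G (Phi n b)"
    proof (intro ballI)
      fix a b assume ab: "a \<in> dowling n K" "b \<in> dowling n K"
      show "dowling_le a b \<longleftrightarrow> pointwise_stab n G (Phi n a) \<subseteq> pointwise_stab n G (Phi n b)"
        using P2[OF ab] Phi_le[OF K ab] by simp
    qed
  qed
  have iso2: "poset_iso (intersection_lattice n G) (\<lambda>X Y. Y \<subseteq> X) (dowling n K) dowling_le"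
  proof (rule iso_from)
    show "bij_betw (Phi n) (dowling n K) (intersection_lattice n G)"
      unfolding bij_betw_def using inj L1 by blast
    show "\<forall>a\<in>dowling n K. \<forall>b\<in>dowling n K. dowling_le a b \<longleftrightarrow> Phi n b \<subseteq> Phi n a"
    proof (intro ballI)
      fix a b assume ab: "a \<in> dowling n K" "b \<in> dowling n K"
      show "dowling_le a b \<longleftrightarrow> Phi n b \<subseteq> Phi n a"
        using Phi_le[OF K ab] by simp
    qed
  qed
  show ?thesis using iso1 iso2 unfolding G_def by blast
qed



end
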